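(* Let $G$ be a countable even-by-quotient abelian group with $\dim_{\mathbb Q}(G\otimes\mathbb Q)<\infty$, and let $H$ be the subgroup generated by a maximal independent system of elements of infinite order of $G$. Then the exact sequence \[0\to H\overset{i}{\to}G\overset{\pi}{\to}G/H\to0\] is coarsely split.
   Context: A set of nonzero elements $\{x_j\}$ of an abelian group is independent if $\sum n_jx_j=0$ implies $n_jx_j=0$ for all $j$. A countable abelian group $G$ is even-by-quotient if, for $H$ the subgroup generated by a maximal independent system of elements of infinite order, every element of $G/H$ has order a power of $2$. A proper left invariant metric on a countable group is $d(g,h)=\|g^{-1}h\|$ for a proper norm ($\|g\|=0$ iff $g=1$, $\|g\|=\|g^{-1}\|$, subadditive, finite balls). An exact sequence $0\to K\overset{i}{\to}G\overset{\pi}{\to}Q\to0$ is coarsely split if there are proper left invariant metrics $d_K,d_G,d_Q$ and a coarse equivalence $f:(G,d_G)\to(K\oplus Q,d_K\oplus d_Q)$ ($\ell_1$ sum metric) such that $f\circ i$ is at bounded distance from $k\mapsto(k,0)$ and $\pi'\circ f$ is at bounded distance from $\pi$, $\pi'$ the projection onto $Q$. Coarse maps: for each $\delta$ there is $\epsilon$ with $d(x,y)\le\delta\Rightarrow d(f(x),f(y))\le\epsilon$; coarse equivalences: coarse maps with coarse inverses up to bounded distance. *)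

theory Defs
  imports Complex_Main "HOL-Library.Countable_Set"
begin

definition nsm :: "nat \<Rightarrow> 'a::ab_group_add \<Rightarrow> 'a" where
  "nsm n x = (\<Sum>i<n. x)"

definition zsm :: "int \<Rightarrow> 'a::ab_group_add \<Rightarrow> 'a" where
  "zsm k x = (if 0 \<le> k then nsm (nat k) x else - nsm (nat (- k)) x)"

definition gen :: "'a::ab_group_add set \<Rightarrow> 'a set" where
  "gen S = {(\<Sum>x\<in>F. zsm (c x) x) | F c. finite F \<and> F \<subseteq> S}"

definition infinite_order :: "'a::ab_group_add \<Rightarrow> bool" where
  "infinite_order x \<longleftrightarrow> (\<forall>k. zsm k x = 0 \<longrightarrow> k = 0)"

definition independent_sys :: "'a::ab_group_add set \<Rightarrow> bool" where
  "independent_sys S \<longleftrightarrow> 0 \<notin> S \<and>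
     (\<forall>F c. finite F \<and> F \<subseteq> S \<and> (\<Sum>x\<in>F. zsm (c x) x) = 0
        \<longrightarrow> (\<forall>x\<in>F. zsm (c x) x = 0))"

definition max_indep_inf_order :: "'a::ab_group_add set \<Rightarrow> bool" where
  "max_indep_inf_order S \<longleftrightarrow> independent_sys S \<and> (\<forall>x\<in>S. infinite_order x) \<and>
     (\<forall>T. independent_sys T \<and> (\<forall>x\<in>T. infinite_order x) \<and> S \<subseteq> T \<longrightarrow> T = S)"

text \<open>Even-by-quotient with respect to the maximal independent system S:
  every element of G/<S> has order a power of 2.\<close>
definition even_by_quotient :: "'a::ab_group_add set \<Rightarrow> bool" where
  "even_by_quotient S \<longleftrightarrow> (\<forall>g::'a. \<exists>k::nat. zsm (2 ^ k) g \<in> gen S)"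

text \<open>dim_Q (G \<otimes> Q) finite: G \<otimes> Q is spanned by finitely many x \<otimes> 1,
  i.e. some finite F such that every g has a nonzero multiple in <F>.\<close>
definition finite_Q_dim :: "'a::ab_group_add itself \<Rightarrow> bool" where
  "finite_Q_dim _ \<longleftrightarrow> (\<exists>F::'a set. finite F \<and> (\<forall>g::'a. \<exists>m. m \<noteq> 0 \<and> zsm m g \<in> gen F))"

definition coset :: "'a::ab_group_add set \<Rightarrow> 'a \<Rightarrow> 'a set" where
  "coset H g = (\<lambda>h. g + h) ` H"

definition quot :: "'a::ab_group_add set \<Rightarrow> 'a set set" where
  "quot H = range (coset H)"

definition qadd :: "'a::ab_group_add set \<Rightarrow> 'a set \<Rightarrow> 'a set" where
  "qadd A B = {a + b | a b. a \<in> A \<and> b \<in> B}"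

definition qneg :: "'a::ab_group_add set \<Rightarrow> 'a set" where
  "qneg A = uminus ` A"

definition proper_norm :: "'g set \<Rightarrow> ('g \<Rightarrow> 'g \<Rightarrow> 'g) \<Rightarrow> ('g \<Rightarrow> 'g) \<Rightarrow> 'g \<Rightarrow> ('g \<Rightarrow> real) \<Rightarrow> bool" where
  "proper_norm A p n z N \<longleftrightarrow>
     (\<forall>x\<in>A. N x = 0 \<longleftrightarrow> x = z) \<and>
     (\<forall>x\<in>A. N (n x) = N x) \<and>
     (\<forall>x\<in>A. \<forall>y\<in>A. N (p x y) \<le> N x + N y) \<and>
     (\<forall>r. finite {x\<in>A. N x \<le> r})"

definition norm_dist :: "('g \<Rightarrow> 'g \<Rightarrow> 'g) \<Rightarrow> ('g \<Rightarrow> 'g) \<Rightarrow> ('g \<Rightarrow> real) \<Rightarrow> 'g \<Rightarrow> 'g \<Rightarrow> real" where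
  "norm_dist p n N g h = N (p (n g) h)"

definition coarse_map :: "'x set \<Rightarrow> ('x \<Rightarrow> 'x \<Rightarrow> real) \<Rightarrow> 'y set \<Rightarrow> ('y \<Rightarrow> 'y \<Rightarrow> real) \<Rightarrow> ('x \<Rightarrow> 'y) \<Rightarrow> bool" where
  "coarse_map X dX Y dY f \<longleftrightarrow> f ` X \<subseteq> Y \<and>
     (\<forall>\<delta>. \<exists>\<epsilon>. \<forall>x\<in>X. \<forall>y\<in>X. dX x y \<le> \<delta> \<longrightarrow> dY (f x) (f y) \<le> \<epsilon>)"

definition coarse_equiv :: "'x set \<Rightarrow> ('x \<Rightarrow> 'x \<Rightarrow> real) \<Rightarrow> 'y set \<Rightarrow> ('y \<Rightarrow> 'y \<Rightarrow> real) \<Rightarrow> ('x \<Rightarrow> 'y) \<Rightarrow> bool" where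
  "coarse_equiv X dX Y dY f \<longleftrightarrow> coarse_map X dX Y dY f \<and>
     (\<exists>g. coarse_map Y dY X dX g \<and>
          (\<exists>C. \<forall>x\<in>X. dX (g (f x)) x \<le> C) \<and>
          (\<exists>C. \<forall>y\<in>Y. dY (f (g y)) y \<le> C))"

text \<open>The exact sequence 0 \<rightarrow> H \<rightarrow> G \<rightarrow> G/H \<rightarrow> 0 (inclusion, coset map) is
  coarsely split; G is the whole type 'a.\<close>
definition coarsely_split :: "'a::ab_group_add set \<Rightarrow> bool" where
  "coarsely_split H \<longleftrightarrow>
    (\<exists>NK NG NQ (f :: 'a \<Rightarrow> 'a \<times> 'a set).
       proper_norm H (+) uminus 0 NK \<and>
       proper_norm UNIV (+) uminus 0 NG \<and>
       proper_norm (quot H) qadd qneg H NQ \<and>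
       (let dK = norm_dist (+) uminus NK;
            dG = norm_dist (+) uminus NG;
            dQ = norm_dist qadd qneg NQ;
            dKQ = (\<lambda>(k, q) (k', q'). dK k k' + dQ q q')
        in coarse_equiv UNIV dG (H \<times> quot H) dKQ f \<and>
           (\<exists>C. \<forall>k\<in>H. dKQ (f k) (k, H) \<le> C) \<and>
           (\<exists>C. \<forall>g. dQ (snd (f g)) (coset H g) \<le> C)))"

end

theory Submission
  imports Defs
begin



lemma nsm_0[simp]: "nsm 0 x = 0" by (simp add: nsm_def)
lemma nsm_Suc: "nsm (Suc n) x = nsm n x + x" by (simp add: nsm_def)

lemma zsm_0[simp]: "zsm 0 x = 0" by (simp add: zsm_def)

lemma zsm_add1: "zsm (a + 1) x = zsm a x + x"
proof (cases "a \<ge> 0")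
  case True
  then have "nat (a+1) = Suc (nat a)" by simp
  then show ?thesis using True by (simp add: zsm_def nsm_Suc)
next
  case False
  then have "nat (-a) = Suc (nat (-(a+1)))" by simp
  then show ?thesis using False by (auto simp: zsm_def nsm_Suc)
qed

lemma zsm_sub1: "zsm (a - 1) x = zsm a x - x"
  using zsm_add1[of "a - 1" x] by (simp add: algebra_simps)

lemma zsm_add: "zsm (a + b) x = zsm a x + zsm b x"
proof (induction b rule: int_induct[where k=0])
  case base then show ?case by simp
next
  case (step1 i)
  have "zsm (a + (i + 1)) x = zsm (a+i) x + x" using zsm_add1[of "a+i" x] by (simp add: add.assoc)
  also have "... = zsm a x + (zsm i x + x)" using step1(2) by (simp add: add.assoc)
  also have "... = zsm a x + zsm (i+1) x" by (simp add: zsm_add1)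
  finally show ?case .
next
  case (step2 i)
  have "zsm (a + (i - 1)) x = zsm (a+i) x - x" using zsm_sub1[of "a+i" x] by (simp add: add_diff_eq)
  also have "... = zsm a x + (zsm i x - x)" using step2(2) by (simp add: add_diff_eq)
  also have "... = zsm a x + zsm (i - 1) x" by (simp add: zsm_sub1)
  finally show ?case .
qed

lemma zsm_1[simp]: "zsm 1 x = x" using zsm_add1[of 0 x] by simp

lemma zsm_uminus_left: "zsm (- a) x = - zsm a x"
  using zsm_add[of a "-a" x] by (simp add: eq_neg_iff_add_eq_0 add.commute)

lemma zsm_diff_left: "zsm (a - b) x = zsm a x - zsm b x"
  using zsm_add[of a "-b" x] zsm_uminus_left[of b x] by simp

lemma zsm_plus_right: "zsm a (x + y) = zsm a x + zsm a y"
proof (induction a rule: int_induct[where k=0])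
  case base then show ?case by simp
next
  case (step1 i)
  have "zsm (i + 1) (x + y) = zsm i (x+y) + (x+y)" by (rule zsm_add1)
  also have "... = (zsm i x + x) + (zsm i y + y)" using step1(2) by (simp add: ac_simps)
  finally show ?case by (simp only: zsm_add1)
next
  case (step2 i)
  have "zsm (i - 1) (x + y) = zsm i (x+y) - (x+y)" by (rule zsm_sub1)
  also have "... = (zsm i x - x) + (zsm i y - y)" using step2(2) by (simp add: algebra_simps)
  finally show ?case by (simp only: zsm_sub1)
qed

lemma zsm_zero_right[simp]: "zsm a 0 = 0"
  using zsm_plus_right[of a 0 0] by simp

lemma zsm_uminus_right: "zsm a (- x) = - zsm a x"
  using zsm_plus_right[of a x "-x"] by (simp add: eq_neg_iff_add_eq_0 add.commute)

lemma zsm_diff_right: "zsm a (x - y) = zsm a x - zsm a y"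
  using zsm_plus_right[of a x "-y"] zsm_uminus_right[of a y] by simp

lemma zsm_mult: "zsm (a * b) x = zsm a (zsm b x)"
proof (induction a rule: int_induct[where k=0])
  case base then show ?case by simp
next
  case (step1 i) then show ?case
    by (simp add: zsm_add1 zsm_add distrib_right)
next
  case (step2 i) then show ?case
    by (simp add: zsm_sub1 zsm_diff_left left_diff_distrib)
qed

lemma zsm_sum: "zsm a (sum f F) = (\<Sum>i\<in>F. zsm a (f i))"
  by (induction F rule: infinite_finite_induct) (auto simp: zsm_plus_right)

section \<open>A proper norm on a countable abelian group\<close>

definition en :: "nat \<Rightarrow> 'a::ab_group_add" where "en = from_nat_into UNIV"

definition vl :: "bool \<times> nat \<Rightarrow> 'a::ab_group_add" where
  "vl p = (if fst p then en (snd p) else - en (snd p))"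

definition cost :: "(bool \<times> nat) list \<Rightarrow> nat" where
  "cost L = sum_list (map (\<lambda>p. snd p + 1) L)"

definition ng :: "'a::ab_group_add \<Rightarrow> nat" where
  "ng x = (LEAST n. \<exists>L. sum_list (map vl L) = x \<and> cost L = n)"

lemma ng_le: "sum_list (map vl L) = x \<Longrightarrow> ng x \<le> cost L"
  unfolding ng_def by (rule Least_le) blast

lemma ng_ex:
  assumes "countable (UNIV :: 'a::ab_group_add set)"
  shows "\<exists>L. sum_list (map vl L) = (x::'a) \<and> cost L = ng x"
proof -
  have "x \<in> range (en::nat \<Rightarrow> 'a)" unfolding en_def using assms by simp
  then obtain i where "en i = x" by (metis imageE)
  then have "sum_list (map vl [(True,i)]) = x" by (simp add: vl_def)
  then have "\<exists>n L. sum_list (map vl L) = x \<and> cost L = n" by blast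
  then show ?thesis unfolding ng_def by (rule LeastI_ex)
qed

lemma ng_0[simp]: "ng 0 = 0"
  using ng_le[of "[]" 0] by (simp add: cost_def)

lemma cost_0: "cost L = 0 \<Longrightarrow> L = []"
  by (cases L) (auto simp: cost_def)

lemma ng_eq_0:
  assumes "countable (UNIV :: 'a::ab_group_add set)" "ng (x::'a) = 0"
  shows "x = 0"
proof -
  obtain L where L: "sum_list (map vl L) = x" "cost L = ng x" using ng_ex[OF assms(1)] by blast
  then have "L = []" using assms(2) cost_0 by simp
  then show ?thesis using L by simp
qed

lemma ng_add:
  assumes "countable (UNIV :: 'a::ab_group_add set)"
  shows "ng ((x::'a) + y) \<le> ng x + ng y"
proof -
  obtain L1 where 1: "sum_list (map vl L1) = x" "cost L1 = ng x" using ng_ex[OF assms] by blast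
  obtain L2 where 2: "sum_list (map vl L2) = y" "cost L2 = ng y" using ng_ex[OF assms] by blast
  have "sum_list (map vl (L1 @ L2)) = x + y" using 1 2 by simp
  then have "ng (x+y) \<le> cost (L1 @ L2)" by (rule ng_le)
  then show ?thesis using 1 2 by (simp add: cost_def)
qed

definition flp :: "bool \<times> nat \<Rightarrow> bool \<times> nat" where "flp p = (\<not> fst p, snd p)"

lemma sum_flp: "sum_list (map vl (map flp L)) = - (sum_list (map vl L) :: 'a::ab_group_add)"
  by (induction L) (auto simp: vl_def flp_def)

lemma cost_flp: "cost (map flp L) = cost L"
  by (induction L) (auto simp: cost_def flp_def)

lemma ng_uminus_le:
  assumes "countable (UNIV :: 'a::ab_group_add set)"
  shows "ng (- (x::'a)) \<le> ng x"
proof -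
  obtain L where 1: "sum_list (map vl L) = x" "cost L = ng x" using ng_ex[OF assms] by blast
  have "sum_list (map vl (map flp L)) = - x" using 1 sum_flp by metis
  then show ?thesis using ng_le 1 cost_flp by metis
qed

lemma ng_uminus:
  assumes "countable (UNIV :: 'a::ab_group_add set)"
  shows "ng (- (x::'a)) = ng x"
  using ng_uminus_le[OF assms, of x] ng_uminus_le[OF assms, of "-x"] by simp

lemma mem_cost: "p \<in> set L \<Longrightarrow> snd p + 1 \<le> cost L"
  by (induction L) (auto simp: cost_def)

lemma length_cost: "length L \<le> cost L"
  by (induction L) (auto simp: cost_def)

lemma ng_finite:
  assumes "countable (UNIV :: 'a::ab_group_add set)"
  shows "finite {x::'a. ng x \<le> r}"
proof -
  have "{x::'a. ng x \<le> r} \<subseteq> (\<lambda>L. sum_list (map vl L)) ` {L. set L \<subseteq> UNIV \<times> {..r} \<and> length L \<le> r}"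
  proof
    fix x :: 'a assume "x \<in> {x. ng x \<le> r}"
    then have r: "ng x \<le> r" by simp
    obtain L where 1: "sum_list (map vl L) = x" "cost L = ng x" using ng_ex[OF assms] by blast
    have "set L \<subseteq> UNIV \<times> {..r}"
    proof
      fix p assume "p \<in> set L"
      then have "snd p + 1 \<le> cost L" by (rule mem_cost)
      then show "p \<in> UNIV \<times> {..r}" using 1 r by (cases p) auto
    qed
    moreover have "length L \<le> r" using length_cost[of L] 1 r by simp
    ultimately show "x \<in> (\<lambda>L. sum_list (map vl L)) ` {L. set L \<subseteq> UNIV \<times> {..r} \<and> length L \<le> r}"
      using 1 by blast
  qed
  moreover have "finite {L. set L \<subseteq> (UNIV::bool set) \<times> {..r} \<and> length L \<le> r}"
    by (rule finite_lists_length_le) simp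
  ultimately show ?thesis by (meson finite_imageI finite_subset)
qed

definition nq :: "'a::ab_group_add set \<Rightarrow> nat" where
  "nq A = (LEAST n. \<exists>x\<in>A. ng x = n)"

lemma nq_le: "x \<in> A \<Longrightarrow> nq A \<le> ng x"
  unfolding nq_def by (rule Least_le) blast

lemma nq_ex: "x \<in> A \<Longrightarrow> \<exists>y\<in>A. ng y = nq A"
  unfolding nq_def by (rule LeastI_ex) blast




definition subg :: "'a::ab_group_add set \<Rightarrow> bool" where
  "subg H \<longleftrightarrow> 0 \<in> H \<and> (\<forall>x\<in>H. \<forall>y\<in>H. x + y \<in> H) \<and> (\<forall>x\<in>H. - x \<in> H)"

lemma subg_diff: "subg H \<Longrightarrow> x \<in> H \<Longrightarrow> y \<in> H \<Longrightarrow> x - y \<in> H"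
  unfolding subg_def diff_conv_add_uminus by blast

lemma mem_coset: "x \<in> coset H g \<longleftrightarrow> x - g \<in> H"
proof
  assume "x \<in> coset H g" then obtain h where "h \<in> H" "x = g + h" unfolding coset_def by blast
  then show "x - g \<in> H" by simp
next
  assume "x - g \<in> H" then show "x \<in> coset H g" unfolding coset_def by (rule image_eqI[rotated]) simp
qed

lemma coset_eqI: "subg H \<Longrightarrow> a - b \<in> H \<Longrightarrow> coset H a = coset H b"
proof (intro set_eqI)
  fix x assume H: "subg H" "a - b \<in> H"
  have "x - b \<in> H" if "x - a \<in> H"
  proof -
    have "(x - a) + (a - b) \<in> H" using H that unfolding subg_def by blast
    then show ?thesis by simp
  qed
  moreover have "x - a \<in> H" if "x - b \<in> H"
  proof -
    have "x - a = (x - b) - (a - b)" by simp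
    then show ?thesis using subg_diff[OF H(1) that H(2)] by simp
  qed
  ultimately show "x \<in> coset H a \<longleftrightarrow> x \<in> coset H b" unfolding mem_coset by blast
qed

lemma coset_self: "subg H \<Longrightarrow> g \<in> coset H g"
  unfolding mem_coset subg_def by simp

lemma coset_0: "coset H 0 = H"
  unfolding coset_def by simp

lemma coset_mem_eq: "subg H \<Longrightarrow> x \<in> coset H g \<Longrightarrow> coset H x = coset H g"
  by (simp add: coset_eqI mem_coset)

lemma qadd_coset: assumes "subg H" shows "qadd (coset H a) (coset H b) = coset H (a + b)"
proof (intro set_eqI iffI)
  fix x assume "x \<in> qadd (coset H a) (coset H b)"
  then obtain u v where uv: "x = u + v" "u - a \<in> H" "v - b \<in> H" unfolding qadd_def mem_coset by blast
  have i: "(u - a) + (v - b) \<in> H" using assms uv(2,3) unfolding subg_def by blast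
  have e: "x - (a + b) = (u - a) + (v - b)" using uv(1) by (simp add: algebra_simps)
  show "x \<in> coset H (a + b)" unfolding mem_coset e by (rule i)
next
  fix x assume "x \<in> coset H (a + b)"
  then have "x - b \<in> coset H a" "b \<in> coset H b" using coset_self[OF assms]
    unfolding mem_coset by (auto simp: algebra_simps)
  moreover have "x = (x - b) + b" by simp
  ultimately show "x \<in> qadd (coset H a) (coset H b)" unfolding qadd_def by blast
qed

lemma qneg_coset: assumes "subg H" shows "qneg (coset H a) = coset H (- a)"
proof (intro set_eqI iffI)
  fix x assume "x \<in> qneg (coset H a)"
  then obtain u where "x = - u" "u - a \<in> H" unfolding qneg_def by (auto simp: mem_coset)
  then have "x - (- a) = - (u - a)" "- (u - a) \<in> H" using assms unfolding subg_def by auto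
  then show "x \<in> coset H (- a)" unfolding mem_coset by simp
next
  fix x assume "x \<in> coset H (- a)"
  then have "x + a \<in> H" unfolding mem_coset by simp
  then have i: "- (x + a) \<in> H" using assms unfolding subg_def by blast
  have e: "- x - a = - (x + a)" by simp
  have "- x - a \<in> H" unfolding e by (rule i)
  then have "- x \<in> coset H a" unfolding mem_coset .
  then show "x \<in> qneg (coset H a)" unfolding qneg_def by (rule image_eqI[rotated]) simp
qed

lemma finite_bound: "finite W \<Longrightarrow> \<exists>C. \<forall>w\<in>W. (F w :: real) \<le> C"
  by (intro exI[of _ "Max (insert 0 (F ` W))"] ballI Max_ge) auto




definition supp :: "('a \<Rightarrow> 'b::zero) \<Rightarrow> 'a set" where "supp c = {x. c x \<noteq> 0}"

definition lc :: "('a::ab_group_add \<Rightarrow> int) \<Rightarrow> 'a" where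
  "lc c = (\<Sum>x\<in>supp c. zsm (c x) x)"

lemma lc_eq: "finite F \<Longrightarrow> supp c \<subseteq> F \<Longrightarrow> (\<Sum>x\<in>F. zsm (c x) x) = lc c"
  unfolding lc_def by (rule sum.mono_neutral_right) (auto simp: supp_def)

lemma lc_zero_fun[simp]: "lc (\<lambda>_. 0) = 0"
  by (simp add: lc_def supp_def)

lemma lc_add: "finite (supp c) \<Longrightarrow> finite (supp d) \<Longrightarrow> lc (\<lambda>x. c x + d x) = lc c + lc d"
proof -
  assume f: "finite (supp c)" "finite (supp d)"
  let ?F = "supp c \<union> supp d"
  have s: "supp (\<lambda>x. c x + d x) \<subseteq> ?F" by (auto simp: supp_def)
  have "lc (\<lambda>x. c x + d x) = (\<Sum>x\<in>?F. zsm (c x + d x) x)" using lc_eq[OF _ s] f by simp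
  also have "\<dots> = (\<Sum>x\<in>?F. zsm (c x) x) + (\<Sum>x\<in>?F. zsm (d x) x)" by (simp add: zsm_add sum.distrib)
  also have "\<dots> = lc c + lc d" using f by (simp add: lc_eq)
  finally show ?thesis .
qed

lemma lc_smult: "finite (supp c) \<Longrightarrow> lc (\<lambda>x. m * c x) = zsm m (lc c)"
proof -
  assume f: "finite (supp c)"
  have s: "supp (\<lambda>x. m * c x) \<subseteq> supp c" by (auto simp: supp_def)
  have "lc (\<lambda>x. m * c x) = (\<Sum>x\<in>supp c. zsm (m * c x) x)" using lc_eq[OF f s] by simp
  also have "\<dots> = zsm m (lc c)" by (simp add: lc_def zsm_sum zsm_mult)
  finally show ?thesis .
qed

lemma lc_uminus: "finite (supp c) \<Longrightarrow> lc (\<lambda>x. - c x) = - lc c"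
  using lc_smult[of c "-1"] by (simp add: zsm_uminus_left)

lemma lc_diff: "finite (supp c) \<Longrightarrow> finite (supp d) \<Longrightarrow> lc (\<lambda>x. c x - d x) = lc c - lc d"
proof -
  assume f: "finite (supp c)" "finite (supp d)"
  have f2: "finite (supp (\<lambda>x. - d x))" using f(2) by (simp add: supp_def)
  have "lc (\<lambda>x. c x - d x) = lc (\<lambda>x. c x + (- d x))" by simp
  also have "\<dots> = lc c + lc (\<lambda>x. - d x)" by (rule lc_add[OF f(1) f2])
  also have "\<dots> = lc c - lc d" using lc_uminus[OF f(2)] by simp
  finally show ?thesis .
qed

definition FS :: "'a set \<Rightarrow> ('a \<Rightarrow> int) \<Rightarrow> bool" where
  "FS S c \<longleftrightarrow> finite (supp c) \<and> supp c \<subseteq> S"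

lemma gen_iff: "h \<in> gen S \<longleftrightarrow> (\<exists>c. FS S c \<and> h = lc c)"
proof
  assume "h \<in> gen S"
  then obtain F c where F: "h = (\<Sum>x\<in>F. zsm (c x) x)" "finite F" "F \<subseteq> S" unfolding gen_def by blast
  define c' where "c' x = (if x \<in> F then c x else 0)" for x
  have s: "supp c' \<subseteq> F" by (auto simp: supp_def c'_def)
  have "h = (\<Sum>x\<in>F. zsm (c' x) x)" unfolding F(1) by (rule sum.cong) (auto simp: c'_def)
  also have "\<dots> = lc c'" by (rule lc_eq[OF F(2) s])
  finally have "h = lc c'" .
  moreover have "FS S c'" unfolding FS_def using s F(2,3) finite_subset by blast
  ultimately show "\<exists>c. FS S c \<and> h = lc c" by blast
next
  assume "\<exists>c. FS S c \<and> h = lc c"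
  then obtain c where "FS S c" "h = lc c" by blast
  then show "h \<in> gen S" unfolding gen_def lc_def FS_def by blast
qed

lemma FS_add: "FS S c \<Longrightarrow> FS S d \<Longrightarrow> FS S (\<lambda>x. c x + d x)"
proof -
  assume a: "FS S c" "FS S d"
  have "supp (\<lambda>x. c x + d x) \<subseteq> supp c \<union> supp d" by (auto simp: supp_def)
  then show ?thesis using a unfolding FS_def by (meson finite_UnI finite_subset le_sup_iff subset_trans)
qed

lemma FS_diff: "FS S c \<Longrightarrow> FS S d \<Longrightarrow> FS S (\<lambda>x. c x - d x)"
proof -
  assume a: "FS S c" "FS S d"
  have "supp (\<lambda>x. c x - d x) \<subseteq> supp c \<union> supp d" by (auto simp: supp_def)
  then show ?thesis using a unfolding FS_def by (meson finite_UnI finite_subset le_sup_iff subset_trans)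
qed

lemma FS_smult: "FS S c \<Longrightarrow> FS S (\<lambda>x. m * c x)"
proof -
  assume a: "FS S c"
  have "supp (\<lambda>x. m * c x) \<subseteq> supp c" by (auto simp: supp_def)
  then show ?thesis using a unfolding FS_def by (meson finite_subset subset_trans)
qed

lemma FS_sub: "FS S c \<Longrightarrow> supp d \<subseteq> supp c \<Longrightarrow> FS S d"
  unfolding FS_def by (meson finite_subset subset_trans)

lemma gen_subg: "subg (gen S)"
  unfolding subg_def
proof (intro conjI ballI)
  show "0 \<in> gen S" unfolding gen_iff
    by (rule exI[of _ "\<lambda>_. 0"]) (simp add: FS_def supp_def)
next
  fix x y assume "x \<in> gen S" "y \<in> gen S"
  then obtain c d where cd: "FS S c" "x = lc c" "FS S d" "y = lc d" unfolding gen_iff by blast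
  have "FS S (\<lambda>x. c x + d x)" using cd by (intro FS_add)
  moreover have "x + y = lc (\<lambda>x. c x + d x)" using cd unfolding FS_def by (simp add: lc_add)
  ultimately show "x + y \<in> gen S" unfolding gen_iff by blast
next
  fix x assume "x \<in> gen S"
  then obtain c where cd: "FS S c" "x = lc c" unfolding gen_iff by blast
  have "FS S (\<lambda>x. (-1) * c x)" using cd by (intro FS_smult)
  moreover have "- x = lc (\<lambda>x. (-1) * c x)" using cd unfolding FS_def by (simp add: lc_uminus)
  ultimately show "- x \<in> gen S" unfolding gen_iff by blast
qed

lemma gen_zsm: "h \<in> gen S \<Longrightarrow> zsm m h \<in> gen S"
proof -
  assume "h \<in> gen S"
  then obtain c where cd: "FS S c" "h = lc c" unfolding gen_iff by blast
  have "FS S (\<lambda>x. m * c x)" using cd by (intro FS_smult)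
  moreover have "zsm m h = lc (\<lambda>x. m * c x)" using cd unfolding FS_def by (simp add: lc_smult)
  ultimately show ?thesis unfolding gen_iff by blast
qed

locale ctx =
  fixes S :: "'a::ab_group_add set"
  assumes indep: "independent_sys S"
    and inford: "\<forall>x\<in>S. infinite_order x"
    and tors: "\<forall>g. \<exists>m::int. m > 0 \<and> zsm m g \<in> gen S"
begin

lemma lc_zero: assumes "FS S c" "lc c = 0" shows "c = (\<lambda>_. 0)"
proof -
  have "finite (supp c)" "supp c \<subseteq> S" using assms(1) by (auto simp: FS_def)
  moreover have "(\<Sum>x\<in>supp c. zsm (c x) x) = 0" using assms(2) by (simp add: lc_def)
  ultimately have "\<forall>x\<in>supp c. zsm (c x) x = 0"
    using indep unfolding independent_sys_def by (elim conjE allE[of _ "supp c"] allE[of _ c]) simp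
  then have "\<forall>x\<in>supp c. c x = 0" using inford \<open>supp c \<subseteq> S\<close> unfolding infinite_order_def by blast
  then show ?thesis by (auto simp: supp_def)
qed

lemma lc_inj: assumes "FS S c" "FS S d" "lc c = lc d" shows "c = d"
proof -
  have "lc (\<lambda>x. c x - d x) = 0" using assms by (simp add: lc_diff FS_def)
  then have eq: "(\<lambda>x. c x - d x) = (\<lambda>_. 0)" using lc_zero FS_diff assms by blast
  show ?thesis
  proof
    fix x show "c x = d x" using fun_cong[OF eq, of x] by simp
  qed
qed

definition mu :: "'a \<Rightarrow> int" where "mu g = (SOME m. m > 0 \<and> zsm m g \<in> gen S)"

definition cf :: "'a \<Rightarrow> 'a \<Rightarrow> int" where "cf h = (THE c. FS S c \<and> lc c = h)"

definition phi :: "'a \<Rightarrow> 'a \<Rightarrow> real" where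
  "phi g x = real_of_int (cf (zsm (mu g) g) x) / real_of_int (mu g)"

lemma cf_lc: "FS S c \<Longrightarrow> cf (lc c) = c"
  unfolding cf_def by (rule the_equality) (auto intro: lc_inj)

lemma mu: "mu g > 0" "zsm (mu g) g \<in> gen S"
proof -
  have "\<exists>m. m > 0 \<and> zsm m g \<in> gen S" using tors by blast
  then have "mu g > 0 \<and> zsm (mu g) g \<in> gen S" unfolding mu_def by (rule someI_ex)
  then show "mu g > 0" "zsm (mu g) g \<in> gen S" by auto
qed

lemma phi_char:
  assumes m: "m > 0" and c: "FS S c" and e: "zsm m g = lc c"
  shows "phi g = (\<lambda>x. real_of_int (c x) / real_of_int m)"
proof
  fix x
  obtain c0 where c0: "FS S c0" "zsm (mu g) g = lc c0" using mu(2) unfolding gen_iff by blast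
  have "lc (\<lambda>x. m * c0 x) = zsm m (lc c0)" using c0 by (simp add: lc_smult FS_def)
  also have "\<dots> = zsm (m * mu g) g" using c0 by (simp add: zsm_mult)
  also have "\<dots> = zsm (mu g) (zsm m g)" by (simp add: zsm_mult[symmetric] mult.commute)
  also have "\<dots> = lc (\<lambda>x. mu g * c x)" using c e by (simp add: lc_smult FS_def)
  finally have "(\<lambda>x. m * c0 x) = (\<lambda>x. mu g * c x)" using lc_inj FS_smult c c0 by blast
  then have eq: "m * c0 x = mu g * c x" by metis
  have "phi g x = real_of_int (c0 x) / real_of_int (mu g)" unfolding phi_def c0(2) cf_lc[OF c0(1)] ..
  also have "\<dots> = real_of_int (c x) / real_of_int m"
  proof -
    have "real_of_int m * real_of_int (c0 x) = real_of_int (mu g) * real_of_int (c x)"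
      using eq by (metis of_int_mult)
    then show ?thesis using m mu(1)[of g] by (simp add: field_simps)
  qed
  finally show "phi g x = real_of_int (c x) / real_of_int m" .
qed

lemma phi_ex: "\<exists>m c. m > 0 \<and> FS S c \<and> zsm m g = lc c"
  using mu[of g] unfolding gen_iff by blast

lemma phi_add: "phi (x + y) = (\<lambda>i. phi x i + phi y i)"
proof -
  obtain m1 c1 where 1: "m1 > 0" "FS S c1" "zsm m1 x = lc c1" using phi_ex by blast
  obtain m2 c2 where 2: "m2 > 0" "FS S c2" "zsm m2 y = lc c2" using phi_ex by blast
  have "zsm (m1 * m2) (x + y) = zsm m2 (zsm m1 x) + zsm m1 (zsm m2 y)"
    by (simp add: zsm_plus_right zsm_mult[symmetric] mult.commute)
  also have "\<dots> = lc (\<lambda>i. m2 * c1 i + m1 * c2 i)"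
    using 1 2 by (simp add: lc_smult lc_add FS_def supp_def)
  finally have e: "zsm (m1 * m2) (x + y) = lc (\<lambda>i. m2 * c1 i + m1 * c2 i)" .
  have FSs: "FS S (\<lambda>i. m2 * c1 i + m1 * c2 i)" using 1 2 by (intro FS_add FS_smult)
  have "phi (x + y) = (\<lambda>i. real_of_int (m2 * c1 i + m1 * c2 i) / real_of_int (m1 * m2))"
    using phi_char[OF _ FSs e] 1 2 by simp
  moreover have "phi x = (\<lambda>i. real_of_int (c1 i) / real_of_int m1)" using phi_char 1 by blast
  moreover have "phi y = (\<lambda>i. real_of_int (c2 i) / real_of_int m2)" using phi_char 2 by blast
  ultimately show ?thesis using 1 2 by (auto simp: field_simps)
qed

lemma phi_lc: "FS S d \<Longrightarrow> phi (lc d) = (\<lambda>i. real_of_int (d i))"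
  using phi_char[of 1 d "lc d"] by simp

lemma phi_supp: "FS S (\<lambda>i. \<lfloor>phi g i\<rfloor>)" "finite {i. phi g i \<noteq> 0}"
proof -
  obtain m c where 1: "m > 0" "FS S c" "zsm m g = lc c" using phi_ex by blast
  have p: "phi g = (\<lambda>i. real_of_int (c i) / real_of_int m)" using phi_char 1 by blast
  have s: "{i. phi g i \<noteq> 0} \<subseteq> supp c" unfolding p supp_def by auto
  have "supp (\<lambda>i. \<lfloor>phi g i\<rfloor>) \<subseteq> supp c" unfolding supp_def p by auto
  then show "FS S (\<lambda>i. \<lfloor>phi g i\<rfloor>)" using FS_sub 1(2) by blast
  show "finite {i. phi g i \<noteq> 0}" using s 1(2) unfolding FS_def by (meson finite_subset)
qed

definition fl :: "'a \<Rightarrow> 'a" where "fl g = lc (\<lambda>i. \<lfloor>phi g i\<rfloor>)"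

lemma fl_gen: "fl g \<in> gen S"
  unfolding fl_def gen_iff using phi_supp(1) by blast

lemma fl_shift: assumes "h \<in> gen S" shows "fl (g + h) = fl g + h"
proof -
  obtain d where d: "FS S d" "h = lc d" using assms unfolding gen_iff by blast
  have "phi (g + h) = (\<lambda>i. phi g i + real_of_int (d i))" unfolding phi_add d(2) phi_lc[OF d(1)] ..
  then have "(\<lambda>i. \<lfloor>phi (g + h) i\<rfloor>) = (\<lambda>i. \<lfloor>phi g i\<rfloor> + d i)" by (simp only: floor_add_int[symmetric])
  then have "fl (g + h) = lc (\<lambda>i. \<lfloor>phi g i\<rfloor> + d i)" unfolding fl_def by simp
  also have "\<dots> = fl g + h" unfolding fl_def d(2) using phi_supp(1) d(1)
    by (intro lc_add) (auto simp: FS_def)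
  finally show ?thesis .
qed

lemma fl_diff_finite: "finite (range (\<lambda>x. fl (x + d) - fl x))"
proof -
  let ?b = "phi d"
  let ?F = "{i. ?b i \<noteq> 0}"
  define G where "G T = lc (\<lambda>i. if i \<in> T then \<lfloor>?b i\<rfloor> + 1 else if i \<in> ?F then \<lfloor>?b i\<rfloor> else 0)" for T
  have "range (\<lambda>x. fl (x + d) - fl x) \<subseteq> G ` Pow ?F"
  proof
    fix y assume "y \<in> range (\<lambda>x. fl (x + d) - fl x)"
    then obtain x where y: "y = fl (x + d) - fl x" by blast
    define T where "T = {i \<in> ?F. \<lfloor>phi x i + ?b i\<rfloor> - \<lfloor>phi x i\<rfloor> = \<lfloor>?b i\<rfloor> + 1}"
    have "y = lc (\<lambda>i. \<lfloor>phi (x + d) i\<rfloor> - \<lfloor>phi x i\<rfloor>)" unfolding y fl_def using phi_supp(1)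
      by (intro lc_diff[symmetric]) (auto simp: FS_def)
    also have "(\<lambda>i. \<lfloor>phi (x + d) i\<rfloor> - \<lfloor>phi x i\<rfloor>)
       = (\<lambda>i. if i \<in> T then \<lfloor>?b i\<rfloor> + 1 else if i \<in> ?F then \<lfloor>?b i\<rfloor> else 0)"
    proof
      fix i
      have fa: "\<lfloor>phi x i + ?b i\<rfloor> - \<lfloor>phi x i\<rfloor> = \<lfloor>?b i\<rfloor> \<or> \<lfloor>phi x i + ?b i\<rfloor> - \<lfloor>phi x i\<rfloor> = \<lfloor>?b i\<rfloor> + 1"
        using floor_add[of "phi x i" "?b i"] by (auto split: if_splits)
      have pa: "phi (x + d) i = phi x i + ?b i" unfolding phi_add ..
      show "\<lfloor>phi (x + d) i\<rfloor> - \<lfloor>phi x i\<rfloor>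
         = (if i \<in> T then \<lfloor>?b i\<rfloor> + 1 else if i \<in> ?F then \<lfloor>?b i\<rfloor> else 0)"
      proof (cases "?b i = 0")
        case True
        then have "i \<notin> T" unfolding T_def by simp
        then show ?thesis using True unfolding pa by simp
      next
        case False
        then have iF: "i \<in> ?F" by simp
        show ?thesis
        proof (cases "i \<in> T")
          case True
          then show ?thesis unfolding pa T_def by simp
        next
          case False
          then have "\<lfloor>phi x i + ?b i\<rfloor> - \<lfloor>phi x i\<rfloor> \<noteq> \<lfloor>?b i\<rfloor> + 1" using iF unfolding T_def by simp
          then show ?thesis using fa False iF unfolding pa by simp
        qed
      qed
    qed
    finally have "y = G T" unfolding G_def .
    moreover have "T \<in> Pow ?F" unfolding T_def by blast
    ultimately show "y \<in> G ` Pow ?F" by blast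
  qed
  moreover have "finite (G ` Pow ?F)" using phi_supp(2)[of d] by (intro finite_imageI finite_Pow_iff[THEN iffD2])
  ultimately show ?thesis by (rule finite_subset)
qed

lemma fl_0: "fl 0 = 0"
proof -
  have "phi (lc (\<lambda>_. 0)) = (\<lambda>i. 0)" using phi_lc[of "\<lambda>_. 0"] by (simp add: FS_def supp_def)
  then show ?thesis unfolding fl_def by simp
qed

end




lemma real_le_ceil: assumes "real (n::nat) \<le> r" shows "n \<le> nat \<lceil>r\<rceil>"
proof -
  have "r \<le> real (nat \<lceil>r\<rceil>)" by (rule real_nat_ceiling_ge)
  then have "real n \<le> real (nat \<lceil>r\<rceil>)" using assms by linarith
  then show ?thesis by (simp only: of_nat_le_iff)
qed

lemma proper_ng:
  assumes cnt: "countable (UNIV :: 'a::ab_group_add set)"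
  shows "proper_norm (A::'a set) (+) uminus 0 (\<lambda>x. real (ng x))"
  unfolding proper_norm_def
proof (intro conjI ballI allI)
  fix x :: 'a
  have "ng x = 0 \<Longrightarrow> x = 0" by (rule ng_eq_0[OF cnt])
  then show "(real (ng x) = 0) = (x = 0)" by auto
  show "real (ng (- x)) = real (ng x)" using ng_uminus[OF cnt] by simp
next
  fix x y :: 'a show "real (ng (x + y)) \<le> real (ng x) + real (ng y)"
    using ng_add[OF cnt, of x y] by simp
next
  fix r :: real
  have "{x \<in> A. real (ng x) \<le> r} \<subseteq> {x. ng x \<le> nat \<lceil>r\<rceil>}" using real_le_ceil by blast
  then show "finite {x \<in> A. real (ng x) \<le> r}" using ng_finite[OF cnt] finite_subset by blast
qed

context ctx
begin

lemma nq_uminus_le: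
  assumes cnt: "countable (UNIV :: 'a set)"
  shows "nq (coset (gen S) (- g)) \<le> nq (coset (gen S) g)"
proof -
  obtain y where y: "y \<in> coset (gen S) g" "ng y = nq (coset (gen S) g)"
    using nq_ex[OF coset_self[OF gen_subg, of g]] by blast
  have "y - g \<in> gen S" using y(1) mem_coset by blast
  then have "- (y - g) \<in> gen S" using gen_subg unfolding subg_def by blast
  then have "- y \<in> coset (gen S) (- g)" unfolding mem_coset by simp
  then have "nq (coset (gen S) (- g)) \<le> ng (- y)" by (rule nq_le)
  then show ?thesis using y(2) ng_uminus[OF cnt] by simp
qed

lemma main:
  assumes cnt: "countable (UNIV :: 'a set)"
  shows "coarsely_split (gen S)"
proof -
  define H where "H = gen S"
  have sH: "subg H" unfolding H_def by (rule gen_subg)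
  define N where "N = (\<lambda>x::'a. real (ng x))"
  define NQ where "NQ = (\<lambda>A::'a set. real (nq A))"
  define f where "f = (\<lambda>g. (fl g, coset H g))"
  define dQ where "dQ = norm_dist qadd qneg NQ"
  define dK where "dK = norm_dist (+) uminus N"
  define dKQ where "dKQ = (\<lambda>(k, q) (k', q'). dK k k' + dQ q q')"
  have N0: "N 0 = 0" unfolding N_def by simp
  have Nnn: "N x \<ge> 0" for x unfolding N_def by simp
  have NQnn: "NQ A \<ge> 0" for A unfolding NQ_def by simp
  have dK_eq: "dK a b = N (- a + b)" for a b unfolding dK_def norm_dist_def ..
  have dQ_coset: "dQ (coset H a) (coset H b) = NQ (coset H (- a + b))" for a b
    unfolding dQ_def norm_dist_def qneg_coset[OF sH] qadd_coset[OF sH] ..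
  have dKQ_eq: "dKQ (k, q) (k', q') = dK k k' + dQ q q'" for k q k' q' unfolding dKQ_def by simp
  have NQ_le: "NQ (coset H t) \<le> N t" for t
    unfolding NQ_def N_def using nq_le[OF coset_self[OF sH]] by simp
  have NQH: "NQ H = 0" unfolding NQ_def using nq_le[of 0 H] sH unfolding subg_def by simp
  have flH: "fl k = k" if "k \<in> H" for k using fl_shift[of k 0] that fl_0 unfolding H_def by simp
  have cosH: "coset H k = H" if "k \<in> H" for k
    using coset_eqI[OF sH, of k 0] that coset_0 by simp
  have P1: "proper_norm H (+) uminus 0 N" unfolding N_def by (rule proper_ng[OF cnt])
  have P2: "proper_norm UNIV (+) uminus 0 N" unfolding N_def by (rule proper_ng[OF cnt])
  have P3: "proper_norm (quot H) qadd qneg H NQ"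
    unfolding proper_norm_def
  proof (intro conjI ballI allI)
    fix A assume "A \<in> quot H"
    then obtain g where A: "A = coset H g" unfolding quot_def by blast
    show "(NQ A = 0) = (A = H)"
    proof
      assume "NQ A = 0"
      obtain y where y: "y \<in> A" "ng y = nq A" using nq_ex[OF coset_self[OF sH, of g]] A by blast
      then have "ng y = 0" using \<open>NQ A = 0\<close> unfolding NQ_def by simp
      then have "y = 0" using ng_eq_0[OF cnt] by blast
      then have "0 \<in> A" using y(1) by simp
      then have "coset H 0 = A" using coset_mem_eq[OF sH] A by blast
      then show "A = H" using coset_0[of H] by simp
    next
      assume "A = H" then show "NQ A = 0" using NQH by simp
    qed
    have qa: "qneg A = coset H (- g)" using qneg_coset[OF sH] A by simp
    show "NQ (qneg A) = NQ A"
      using nq_uminus_le[OF cnt, of g] nq_uminus_le[OF cnt, of "-g"]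
      unfolding qa unfolding NQ_def A H_def by simp
  next
    fix A B assume "A \<in> quot H" "B \<in> quot H"
    then obtain a b where A: "A = coset H a" and B: "B = coset H b" unfolding quot_def by blast
    obtain y where y: "y \<in> A" "ng y = nq A" using nq_ex[OF coset_self[OF sH, of a]] A by blast
    obtain z where z: "z \<in> B" "ng z = nq B" using nq_ex[OF coset_self[OF sH, of b]] B by blast
    have "y + z \<in> qadd A B" unfolding qadd_def using y z by blast
    then have "nq (qadd A B) \<le> ng (y + z)" by (rule nq_le)
    also have "\<dots> \<le> ng y + ng z" by (rule ng_add[OF cnt])
    finally show "NQ (qadd A B) \<le> NQ A + NQ B" unfolding NQ_def using y z by simp
  next
    fix r :: real
    have "{A \<in> quot H. NQ A \<le> r} \<subseteq> coset H ` {x. ng x \<le> nat \<lceil>r\<rceil>}"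
    proof
      fix A assume "A \<in> {A \<in> quot H. NQ A \<le> r}"
      then obtain g where A: "A = coset H g" "NQ A \<le> r" unfolding quot_def by blast
      obtain y where y: "y \<in> A" "ng y = nq A" using nq_ex[OF coset_self[OF sH, of g]] A by blast
      have "coset H y = A" using coset_mem_eq[OF sH] y(1) A by blast
      moreover have "ng y \<le> nat \<lceil>r\<rceil>" using y(2) A(2) real_le_ceil unfolding NQ_def by simp
      ultimately show "A \<in> coset H ` {x. ng x \<le> nat \<lceil>r\<rceil>}" by blast
    qed
    moreover have "finite (coset H ` {x. ng x \<le> nat \<lceil>r\<rceil>})" using ng_finite[OF cnt] by blast
    ultimately show "finite {A \<in> quot H. NQ A \<le> r}" by (rule finite_subset)
  qed
  have fY: "f x \<in> H \<times> quot H" for x unfolding f_def quot_def H_def using fl_gen by blast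
  have inj: "inj f"
  proof (rule injI)
    fix x y assume "f x = f y"
    then have e: "fl x = fl y" "coset H x = coset H y" unfolding f_def by auto
    have "y \<in> coset H x" using e(2) coset_self[OF sH, of y] by simp
    then have "y - x \<in> H" unfolding mem_coset .
    then have "fl (x + (y - x)) = fl x + (y - x)" using fl_shift unfolding H_def by blast
    then show "x = y" using e(1) by simp
  qed
  have surj: "p \<in> range f" if pY: "p \<in> H \<times> quot H" for p
  proof -
    obtain k g where p: "p = (k, coset H g)" "k \<in> H" using pY unfolding quot_def by blast
    have kf: "k - fl g \<in> H" using sH p(2) fl_gen unfolding H_def by (simp add: subg_diff)
    have "fl (g + (k - fl g)) = fl g + (k - fl g)" using fl_shift kf unfolding H_def by blast
    moreover have "coset H (g + (k - fl g)) = coset H g" using coset_eqI[OF sH] kf by simp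
    ultimately have "f (g + (k - fl g)) = p" unfolding f_def p by simp
    then show ?thesis by blast
  qed
  define g' where "g' = inv_into UNIV f"
  have fg: "f (g' p) = p" if "p \<in> H \<times> quot H" for p
    unfolding g'_def by (rule f_inv_into_f[OF surj[OF that]])
  have gf: "g' (f x) = x" for x unfolding g'_def using inj by simp
  have Bfin: "finite {v::'a. N v \<le> \<delta>}" for \<delta>
  proof -
    have "{v::'a. N v \<le> \<delta>} \<subseteq> {v. ng v \<le> nat \<lceil>\<delta>\<rceil>}" unfolding N_def using real_le_ceil by blast
    then show ?thesis using ng_finite[OF cnt] finite_subset by blast
  qed
  have fcoarse: "coarse_map UNIV dK (H \<times> quot H) dKQ f"
    unfolding coarse_map_def
  proof (intro conjI allI)
    show "f ` UNIV \<subseteq> H \<times> quot H" using fY by blast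
    fix \<delta>
    let ?B = "{v::'a. N v \<le> \<delta>}"
    let ?W = "\<Union>d\<in>?B. range (\<lambda>x. fl (x + d) - fl x)"
    have "finite ?W" using Bfin fl_diff_finite by blast
    then obtain C where C: "\<forall>w\<in>?W. N w \<le> C" using finite_bound by blast
    show "\<exists>\<epsilon>. \<forall>x\<in>UNIV. \<forall>y\<in>UNIV. dK x y \<le> \<delta> \<longrightarrow> dKQ (f x) (f y) \<le> \<epsilon>"
    proof (intro exI[of _ "C + \<delta>"] ballI impI)
      fix x y assume "dK x y \<le> \<delta>"
      then have d: "N (- x + y) \<le> \<delta>" unfolding dK_eq .
      have y: "y = x + (- x + y)" by simp
      have "fl y - fl x = fl (x + (- x + y)) - fl x" by simp
      then have "fl y - fl x \<in> ?W" using d by blast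
      then have "N (fl y - fl x) \<le> C" using C by blast
      moreover have "- fl x + fl y = fl y - fl x" by simp
      ultimately have "N (- fl x + fl y) \<le> C" by simp
      moreover have "NQ (coset H (- x + y)) \<le> \<delta>" using NQ_le d order_trans by blast
      ultimately show "dKQ (f x) (f y) \<le> C + \<delta>"
        unfolding f_def dKQ_eq dK_eq dQ_coset by simp
    qed
  qed
  have gcoarse: "coarse_map (H \<times> quot H) dKQ UNIV dK g'"
    unfolding coarse_map_def
  proof (intro conjI allI)
    show "g' ` (H \<times> quot H) \<subseteq> UNIV" by simp
    fix \<delta>
    let ?B = "{v::'a. N v \<le> \<delta>}"
    let ?W = "\<Union>z\<in>?B. \<Union>a\<in>?B. (\<lambda>e. z - e + a) ` range (\<lambda>x. fl (x + z) - fl x)"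
    have "finite ?W" using Bfin fl_diff_finite by blast
    then obtain C where C: "\<forall>w\<in>?W. N w \<le> C" using finite_bound by blast
    show "\<exists>\<epsilon>. \<forall>p\<in>H \<times> quot H. \<forall>p'\<in>H \<times> quot H. dKQ p p' \<le> \<delta> \<longrightarrow> dK (g' p) (g' p') \<le> \<epsilon>"
    proof (intro exI[of _ C] ballI impI)
      fix p p' assume pY: "p \<in> H \<times> quot H" "p' \<in> H \<times> quot H" and le: "dKQ p p' \<le> \<delta>"
      define x where "x = g' p"
      define y where "y = g' p'"
      have px: "p = f x" "p' = f y" using fg pY unfolding x_def y_def by auto
      have le2: "N (- fl x + fl y) + NQ (coset H (- x + y)) \<le> \<delta>"
        using le unfolding px f_def dKQ_eq dK_eq dQ_coset .
      have a: "N (- fl x + fl y) \<le> \<delta>" using le2 NQnn[of "coset H (- x + y)"] by linarith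
      have b: "NQ (coset H (- x + y)) \<le> \<delta>" using le2 Nnn[of "- fl x + fl y"] by linarith
      obtain z where z: "z \<in> coset H (- x + y)" "ng z = nq (coset H (- x + y))"
        using nq_ex[OF coset_self[OF sH]] by blast
      have zB: "N z \<le> \<delta>" using z(2) b unfolding N_def NQ_def by simp
      define h0 where "h0 = z - (- x + y)"
      have h0: "h0 \<in> H" using z(1) unfolding h0_def mem_coset .
      have "x + z = y + h0" unfolding h0_def by (simp add: algebra_simps)
      moreover have "fl (y + h0) = fl y + h0" using fl_shift h0 unfolding H_def by blast
      ultimately have "fl (x + z) = fl y + h0" by simp
      then have "- x + y = z - (fl (x + z) - fl x) + (- fl x + fl y)"
        unfolding h0_def by (simp add: algebra_simps)
      moreover have "z - (fl (x + z) - fl x) + (- fl x + fl y) \<in> ?W"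
        using zB a by blast
      then have "N (z - (fl (x + z) - fl x) + (- fl x + fl y)) \<le> C" using C by blast
      ultimately have "N (- x + y) \<le> C" by simp
      then show "dK (g' p) (g' p') \<le> C" unfolding dK_eq x_def[symmetric] y_def[symmetric] .
    qed
  qed
  have CE: "coarse_equiv UNIV dK (H \<times> quot H) dKQ f"
    unfolding coarse_equiv_def
  proof (intro conjI exI[of _ g'])
    show "coarse_map UNIV dK (H \<times> quot H) dKQ f" by (rule fcoarse)
    show "coarse_map (H \<times> quot H) dKQ UNIV dK g'" by (rule gcoarse)
    show "\<exists>C. \<forall>x\<in>UNIV. dK (g' (f x)) x \<le> C" unfolding gf dK_eq using N0 by auto
    show "\<exists>C. \<forall>y\<in>H \<times> quot H. dKQ (f (g' y)) y \<le> C"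
    proof (intro exI[of _ 0] ballI)
      fix y assume yY: "y \<in> H \<times> quot H"
      then obtain k g where y: "y = (k, coset H g)" unfolding quot_def by blast
      show "dKQ (f (g' y)) y \<le> 0" unfolding fg[OF yY] unfolding y dKQ_eq dK_eq dQ_coset
        using N0 NQH coset_0[of H] by simp
    qed
  qed
  have B1: "\<exists>C. \<forall>k\<in>H. dKQ (f k) (k, H) \<le> C"
  proof (intro exI[of _ 0] ballI)
    fix k assume k: "k \<in> H"
    have "f k = (k, coset H 0)" unfolding f_def flH[OF k] cosH[OF k] coset_0 ..
    have "dQ (coset H 0) (coset H 0) = 0" unfolding dQ_coset using NQH coset_0[of H] by simp
    then show "dKQ (f k) (k, H) \<le> 0" unfolding \<open>f k = (k, coset H 0)\<close> using coset_0[of H] N0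
      unfolding dKQ_eq dK_eq by simp
  qed
  have B2: "\<exists>C. \<forall>g. dQ (snd (f g)) (coset H g) \<le> C"
  proof (intro exI[of _ 0] allI)
    fix g
    have "snd (f g) = coset H g" by (simp add: f_def)
    then show "dQ (snd (f g)) (coset H g) \<le> 0" using dQ_coset[of g g] NQH coset_0[of H] by simp
  qed
  show ?thesis
    unfolding coarsely_split_def Let_def H_def[symmetric]
    using P1 P2 P3 CE B1 B2 unfolding dKQ_def dK_def dQ_def by blast
qed

end


theorem mainTheorem5:
  fixes S :: "'a::ab_group_add set"
  assumes "countable (UNIV :: 'a set)"
    and "finite_Q_dim TYPE('a)"
    and "max_indep_inf_order S"
    and "even_by_quotient S"
  shows "coarsely_split (gen S)"
proof -
  have i: "independent_sys S" "\<forall>x\<in>S. infinite_order x"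
    using assms(3) unfolding max_indep_inf_order_def by auto
  have t: "\<forall>g. \<exists>m::int. m > 0 \<and> zsm m g \<in> gen S"
  proof
    fix g :: 'a
    obtain k :: nat where "zsm (2 ^ k) g \<in> gen S" using assms(4) unfolding even_by_quotient_def by blast
    moreover have "(2::int) ^ k > 0" by simp
    ultimately show "\<exists>m::int. m > 0 \<and> zsm m g \<in> gen S" by blast
  qed
  interpret ctx S using i t by unfold_locales auto
  show ?thesis by (rule main[OF assms(1)])
qed

end
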